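(* In $\mathsf{FOJT45}$: let $\mathcal{CS}$ be an axiomatically appropriate constant specification and $y$ an individual variable. For every finite set $X$ of individual variables with $y\notin X$, every formula $\varphi(y)$ and every justification term $t$, there is a justification term $\mathsf b(t)$ (built from $t$ using the operations of FOJT45) such that $\vdash_{\mathcal{CS}}\forall y\, t{:}_{Xy}\varphi(y)\to\mathsf b(t){:}_X\forall y\varphi(y)$.
   Context: Syntax of FOJT45: individual variables, predicate symbols, primitive connectives $\to,\bot,\forall$; justification variables $p_i$, constants $c_i$; terms $t::=p_i\mid c\mid (t\cdot t)\mid(t+t)\mid !t\mid ?t\mid\mathsf{gen}_x(t)$ (no primitive $\mathsf b$); formulas $Px_1\dots x_n\mid\bot\mid\varphi\to\varphi\mid\forall x\varphi\mid t{:}_X\varphi$ with $X$ a finite set of individual variables; free variables of $t{:}_X\psi$ are exactly those in $X$. $Xy$ denotes $X\cup\{y\}$ with $y\notin X$. Axioms of FOJT45: A1 classical first-order axioms; A2 $t{:}_{Xy}\varphi\to t{:}_X\varphi$ if $y$ not free in $\varphi$; A3 $t{:}_X\varphi\to t{:}_{Xy}\varphi$; B1 $t{:}_X\varphi\to\varphi$; B2 $t{:}_X(\varphi\to\psi)\to(s{:}_X\varphi\to[t\cdot s]{:}_X\psi)$; B3 $t{:}_X\varphi\to[t+s]{:}_X\varphi$, $s{:}_X\varphi\to[t+s]{:}_X\varphi$; B4 $t{:}_X\varphi\to!t{:}_Xt{:}_X\varphi$; B5 $t{:}_X\varphi\to\mathsf{gen}_x(t){:}_X\forall x\varphi$ if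 $x\notin X$; B6 $\neg t{:}_X\varphi\to ?t{:}_X\neg t{:}_X\varphi$; rules modus ponens and generalization. A constant specification is a set of $c{:}\psi$ with $\psi$ an axiom; axiomatically appropriate if each axiom has some constant; $\vdash_{\mathcal{CS}}$ is provability with $\mathcal{CS}$ added as axioms. *)

theory Defs
  imports Main "HOL-Library.FSet"
begin

type_synonym var = nat

datatype jterm =
    JVar nat
  | JConst nat
  | App jterm jterm
  | Plus jterm jterm
  | Bang jterm
  | Quest jterm
  | Gen var jterm

datatype fm =
    Pred nat "var list"
  | Bot
  | Imp fm fm
  | All var fm
  | Just jterm "var fset" fm

definition Neg :: "fm \<Rightarrow> fm" where "Neg \<phi> = Imp \<phi> Bot"

fun subterms :: "jterm \<Rightarrow> jterm set" where
  "subterms (JVar n) = {JVar n}"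
| "subterms (JConst n) = {JConst n}"
| "subterms (App t s) = insert (App t s) (subterms t \<union> subterms s)"
| "subterms (Plus t s) = insert (Plus t s) (subterms t \<union> subterms s)"
| "subterms (Bang t) = insert (Bang t) (subterms t)"
| "subterms (Quest t) = insert (Quest t) (subterms t)"
| "subterms (Gen x t) = insert (Gen x t) (subterms t)"

fun fv :: "fm \<Rightarrow> var set" where
  "fv (Pred P xs) = set xs"
| "fv Bot = {}"
| "fv (Imp a b) = fv a \<union> fv b"
| "fv (All x a) = fv a - {x}"
| "fv (Just t X a) = fset X"

fun subst :: "var \<Rightarrow> var \<Rightarrow> fm \<Rightarrow> fm" where
  "subst y x (Pred P xs) = Pred P (map (\<lambda>z. if z = x then y else z) xs)"
| "subst y x Bot = Bot"
| "subst y x (Imp a b) = Imp (subst y x a) (subst y x b)"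
| "subst y x (All z a) = (if z = x then All z a else All z (subst y x a))"
| "subst y x (Just t X a) =
     (if x |\<in>| X then Just t (finsert y (X |-| {|x|})) (subst y x a) else Just t X a)"

fun substitutable :: "var \<Rightarrow> var \<Rightarrow> fm \<Rightarrow> bool" where
  "substitutable y x (Pred P xs) = True"
| "substitutable y x Bot = True"
| "substitutable y x (Imp a b) = (substitutable y x a \<and> substitutable y x b)"
| "substitutable y x (All z a) =
     (x \<notin> fv (All z a) \<or> (z \<noteq> y \<and> substitutable y x a))"
| "substitutable y x (Just t X a) =
     (x |\<notin>| X \<or> (substitutable y x a \<and> (y \<in> fv a \<longrightarrow> y |\<in>| X)))"

inductive axiom :: "fm \<Rightarrow> bool" where
  A1_K: "axiom (Imp a (Imp b a))"
| A1_S: "axiom (Imp (Imp a (Imp b c)) (Imp (Imp a b) (Imp a c)))"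
| A1_DN: "axiom (Imp (Neg (Neg a)) a)"
| A1_inst: "substitutable y x a \<Longrightarrow> axiom (Imp (All x a) (subst y x a))"
| A1_dist: "x \<notin> fv a \<Longrightarrow> axiom (Imp (All x (Imp a b)) (Imp a (All x b)))"
| A2: "y |\<notin>| X \<Longrightarrow> y \<notin> fv a \<Longrightarrow> axiom (Imp (Just t (finsert y X) a) (Just t X a))"
| A3: "y |\<notin>| X \<Longrightarrow> axiom (Imp (Just t X a) (Just t (finsert y X) a))"
| B1: "axiom (Imp (Just t X a) a)"
| B2: "axiom (Imp (Just t X (Imp a b)) (Imp (Just s X a) (Just (App t s) X b)))"
| B3l: "axiom (Imp (Just t X a) (Just (Plus t s) X a))"
| B3r: "axiom (Imp (Just s X a) (Just (Plus t s) X a))"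
| B4: "axiom (Imp (Just t X a) (Just (Bang t) X (Just t X a)))"
| B5: "x |\<notin>| X \<Longrightarrow> axiom (Imp (Just t X a) (Just (Gen x t) X (All x a)))"
| B6: "axiom (Imp (Neg (Just t X a)) (Just (Quest t) X (Neg (Just t X a))))"

text \<open>A constant specification: a set of pairs (c, psi), standing for c:psi
  (i.e. c :_{} psi, with empty variable set), where psi is an axiom.\<close>
definition const_spec :: "(nat \<times> fm) set \<Rightarrow> bool" where
  "const_spec CS \<longleftrightarrow> (\<forall>(c, \<psi>) \<in> CS. axiom \<psi>)"

definition axiomatically_appropriate :: "(nat \<times> fm) set \<Rightarrow> bool" where
  "axiomatically_appropriate CS \<longleftrightarrow> const_spec CS \<and> (\<forall>\<psi>. axiom \<psi> \<longrightarrow> (\<exists>c. (c, \<psi>) \<in> CS))"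

inductive provable :: "(nat \<times> fm) set \<Rightarrow> fm \<Rightarrow> bool" where
  ax: "axiom a \<Longrightarrow> provable CS a"
| cs: "(c, a) \<in> CS \<Longrightarrow> provable CS (Just (JConst c) {||} a)"
| mp: "provable CS (Imp a b) \<Longrightarrow> provable CS a \<Longrightarrow> provable CS b"
| gen: "provable CS a \<Longrightarrow> provable CS (All x a)"

end

theory Submission
  imports Defs
begin

lemma K': "provable CS b \<Longrightarrow> provable CS (Imp a b)"
  by (rule provable.mp[OF provable.ax[OF axiom.A1_K]])

lemma S': "provable CS (Imp a (Imp b c)) \<Longrightarrow> provable CS (Imp a b) \<Longrightarrow> provable CS (Imp a c)"
  by (rule provable.mp[OF provable.mp[OF provable.ax[OF axiom.A1_S]]])

lemma trans': "provable CS (Imp a b) \<Longrightarrow> provable CS (Imp b c) \<Longrightarrow> provable CS (Imp a c)"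
proof -
  assume h1: "provable CS (Imp a b)" and h2: "provable CS (Imp b c)"
  show ?thesis using S'[OF K'[OF h2] h1] .
qed

lemma swap': "provable CS (Imp a (Imp b c)) \<Longrightarrow> provable CS (Imp b (Imp a c))"
proof -
  assume h: "provable CS (Imp a (Imp b c))"
  have 1: "provable CS (Imp (Imp a b) (Imp a c))"
    using provable.mp[OF provable.ax[OF axiom.A1_S] h] .
  have 2: "provable CS (Imp b (Imp a b))" by (rule provable.ax, rule axiom.A1_K)
  show ?thesis using trans'[OF 2 1] .
qed

lemma contra': "provable CS (Imp a b) \<Longrightarrow> provable CS (Imp (Neg b) (Neg a))"
proof -
  assume h: "provable CS (Imp a b)"
  have 1: "provable CS (Imp (Imp b Bot) (Imp a (Imp b Bot)))" by (rule provable.ax, rule axiom.A1_K)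
  have 2: "provable CS (Imp (Imp a (Imp b Bot)) (Imp (Imp a b) (Imp a Bot)))"
    by (rule provable.ax, rule axiom.A1_S)
  have "provable CS (Imp (Imp b Bot) (Imp (Imp a b) (Imp a Bot)))" using trans'[OF 1 2] .
  hence "provable CS (Imp (Imp a b) (Imp (Imp b Bot) (Imp a Bot)))" by (rule swap')
  hence "provable CS (Imp (Imp b Bot) (Imp a Bot))" using h by (rule provable.mp)
  thus ?thesis by (simp add: Neg_def)
qed

lemma contraN: "provable CS (Imp (Neg a) b) \<Longrightarrow> provable CS (Imp (Neg b) a)"
proof -
  assume h: "provable CS (Imp (Neg a) b)"
  have dn: "provable CS (Imp (Neg (Neg a)) a)" by (rule provable.ax, rule axiom.A1_DN)
  show ?thesis using trans'[OF contra'[OF h] dn] .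
qed

lemma contraP: "provable CS (Imp a (Neg b)) \<Longrightarrow> provable CS (Imp b (Neg a))"
  unfolding Neg_def by (rule swap')

lemma lift:
  shows "provable CS A \<Longrightarrow> axiomatically_appropriate CS \<Longrightarrow> \<exists>s. provable CS (Just s {||} A)"
proof (induction rule: provable.induct)
  case (ax a CS)
  then obtain c where "(c, a) \<in> CS" unfolding axiomatically_appropriate_def by blast
  then have "provable CS (Just (JConst c) {||} a)" by (rule provable.cs)
  then show ?case by (rule exI)
next
  case (cs c a CS)
  have "provable CS (Just (JConst c) {||} a)" using cs(1) by (rule provable.cs)
  then have "provable CS (Just (Bang (JConst c)) {||} (Just (JConst c) {||} a))"
    by (rule provable.mp[OF provable.ax[OF axiom.B4]])
  then show ?case by (rule exI)
next
  case (mp CS a b)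
  then obtain s1 s2 where h1: "provable CS (Just s1 {||} (Imp a b))" and h2: "provable CS (Just s2 {||} a)" by blast
  show ?case using provable.mp[OF provable.mp[OF provable.ax[OF axiom.B2] h1] h2] by (rule exI)
next
  case (gen CS a x)
  then obtain s where h: "provable CS (Just s {||} a)" by blast
  have n: "x |\<notin>| {||}" by simp
  show ?case using provable.mp[OF provable.ax[OF axiom.B5[OF n]] h] by (rule exI)
qed

lemma weakenX: "provable CS (Just s {||} A) \<Longrightarrow> provable CS (Just s X A)"
proof (induction X)
  case empty then show ?case by simp
next
  case (insert x X)
  have nx: "x |\<notin>| X" using insert by simp
  have ih: "provable CS (Just s X A)" using insert by simp
  show ?case using provable.mp[OF provable.ax[OF axiom.A3[OF nx]] ih] .
qed

lemma liftX:
  assumes "axiomatically_appropriate CS" "provable CS A"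
  shows "\<exists>s. provable CS (Just s X A)"
proof -
  obtain s where "provable CS (Just s {||} A)" using lift[OF assms(2,1)] by blast
  thus ?thesis using weakenX by blast
qed

lemma self_sub: "t \<in> subterms t"
  by (cases t) auto

lemma subst_id: "subst x x a = a"
  by (induction a) auto

lemma substitutable_id: "substitutable x x a"
  by (induction a) auto

theorem mainTheorem6:
  fixes CS :: "(nat \<times> fm) set" and y :: var
  assumes "axiomatically_appropriate CS"
  shows "\<forall>X \<phi> t. y |\<notin>| X \<longrightarrow>
           (\<exists>b. t \<in> subterms b \<and>
                provable CS (Imp (All y (Just t (finsert y X) \<phi>)) (Just b X (All y \<phi>))))"
proof (intro allI impI)
  fix X \<phi> t assume yX: "y |\<notin>| X"
  define \<psi> where "\<psi> = Just t (finsert y X) \<phi>"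
  define \<chi> where "\<chi> = All y \<psi>"
  have inst: "provable CS (Imp \<chi> \<psi>)"
    using provable.ax[OF axiom.A1_inst[OF substitutable_id[of y \<psi>]]]
    by (simp add: \<chi>_def subst_id)
  have np: "provable CS (Imp (Neg \<psi>) (Neg \<chi>))" using contra'[OF inst] .
  obtain c where c: "provable CS (Just c (finsert y X) (Imp (Neg \<psi>) (Neg \<chi>)))"
    using liftX[OF assms np] by blast
  define u where "u = App c (Quest t)"
  have b6: "provable CS (Imp (Neg \<psi>) (Just (Quest t) (finsert y X) (Neg \<psi>)))"
    unfolding \<psi>_def by (rule provable.ax, rule axiom.B6)
  have "provable CS (Imp (Just (Quest t) (finsert y X) (Neg \<psi>)) (Just u (finsert y X) (Neg \<chi>)))"
    unfolding u_def using provable.mp[OF provable.ax[OF axiom.B2] c] .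
  moreover have "provable CS (Imp (Just u (finsert y X) (Neg \<chi>)) (Just u X (Neg \<chi>)))"
    by (rule provable.ax, rule axiom.A2) (use yX in \<open>auto simp: \<chi>_def \<psi>_def Neg_def\<close>)
  ultimately have "provable CS (Imp (Neg \<psi>) (Just u X (Neg \<chi>)))" using b6 trans' by metis
  hence h1: "provable CS (Imp (Neg (Just u X (Neg \<chi>))) \<psi>)" by (rule contraN)
  have "provable CS (Imp \<psi> \<phi>)" unfolding \<psi>_def by (rule provable.ax, rule axiom.B1)
  hence "provable CS (Imp (Neg (Just u X (Neg \<chi>))) \<phi>)" using trans'[OF h1] by metis
  hence G: "provable CS (All y (Imp (Neg (Just u X (Neg \<chi>))) \<phi>))" by (rule provable.gen)
  have H: "provable CS (Imp (All y (Imp (Neg (Just u X (Neg \<chi>))) \<phi>))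
      (Imp (Neg (Just u X (Neg \<chi>))) (All y \<phi>)))"
    by (rule provable.ax, rule axiom.A1_dist) (use yX in \<open>auto simp: Neg_def\<close>)
  have D: "provable CS (Imp (Neg (Just u X (Neg \<chi>))) (All y \<phi>))"
    using provable.mp[OF H G] .
  obtain d where d: "provable CS (Just d X (Imp (Neg (Just u X (Neg \<chi>))) (All y \<phi>)))"
    using liftX[OF assms D] by blast
  have e1: "provable CS (Imp \<chi> (Neg (Just u X (Neg \<chi>))))"
    by (rule contraP, rule provable.ax, rule axiom.B1)
  have e2: "provable CS (Imp (Neg (Just u X (Neg \<chi>))) (Just (Quest u) X (Neg (Just u X (Neg \<chi>)))))"
    by (rule provable.ax, rule axiom.B6)
  have e3: "provable CS (Imp (Just (Quest u) X (Neg (Just u X (Neg \<chi>)))) (Just (App d (Quest u)) X (All y \<phi>)))"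
    using provable.mp[OF provable.ax[OF axiom.B2] d] .
  have F: "provable CS (Imp \<chi> (Just (App d (Quest u)) X (All y \<phi>)))"
    using trans'[OF trans'[OF e1 e2] e3] .
  have T: "t \<in> subterms (App d (Quest u))" by (simp add: u_def self_sub)
  show "\<exists>b. t \<in> subterms b \<and>
                provable CS (Imp (All y (Just t (finsert y X) \<phi>)) (Just b X (All y \<phi>)))"
    using conjI[OF T F[unfolded \<chi>_def \<psi>_def]] by (rule exI)
qed

end
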